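(* Let $S$ be an irreducible $\mathcal{C}$-semigroup with Frobenius vector $\mathbf f$, and let $\mathbf x\in I_S(\mathbf f)$ be a minimal generator of $S$ such that (1) $2\mathbf x-\mathbf f\notin S$, (2) $3\mathbf x\neq 2\mathbf f$, and (3) $4\mathbf x\neq 3\mathbf f$. Then $S'=(S\setminus\{\mathbf x\})\cup\{\mathbf f-\mathbf x\}$ is an irreducible $\mathcal{C}$-semigroup with Frobenius vector $\mathbf f$.
   Context: An integer cone $\mathcal{C}\subseteq\mathbb{N}^p$ is the set of integer points of a finitely generated rational cone in $\mathbb{Q}_{\ge0}^p$. A $\mathcal{C}$-semigroup is a subset $S\subseteq\mathcal{C}$ containing $0$, closed under addition, with $\mathcal{C}\setminus S$ finite; $\mathcal{H}(S)=\mathcal{C}\setminus S$. A minimal generator of $S$ is an element of its (unique) minimal generating set, i.e. a nonzero element of $S$ not expressible as a sum of two nonzero elements of $S$. A monomial order $\preceq$ on $\mathbb{N}^p$ is fixed (total order, compatible with addition, $\mathbf 0\preceq\mathbf c$ for all $\mathbf c$); the Frobenius vector is $F(S)=\max_\preceq\mathcal{H}(S)$. $\mathrm{PF}(S)=\{\mathbf y\in\mathcal{H}(S)\mid\mathbf y+(S\setminus\{0\})\subseteq S\}$; $S$ is irreducible if $\mathrm{PF}(S)=\{F(S)\}$ or $\mathrm{PF}(S)=\{F(S),F(S)/2\}$. $\mathbf x\le_{\mathcal{C}}\mathbf y$ means $\mathbf y-\mathbf x\in\mathcal{C}$, and $I_S(\mathbf n)=\{\mathbf s\in S\mid \mathbf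 s\le_{\mathcal{C}}\mathbf n\}$. The condition $2\mathbf x-\mathbf f\notin S$ is understood in $\mathbb{Z}^p$ (it holds in particular when $2\mathbf x-\mathbf f\notin\mathbb{N}^p$). *)

theory Defs
  imports "HOL-Analysis.Analysis"
begin

text \<open>Points of \<open>\<int>^p\<close> are vectors of type \<open>int ^ 'p\<close>; the dimension p is CARD('p).
  \<open>\<nat>^p\<close> is the set of componentwise nonnegative vectors.\<close>

definition natvecs :: "(int ^ 'p) set" where
  "natvecs = {x. \<forall>i. 0 \<le> x $ i}"

definition integer_cone :: "(int ^ 'p) set \<Rightarrow> bool" where
  "integer_cone C \<longleftrightarrow>
     (\<exists>G :: (real ^ 'p) set. finite G \<and> (\<forall>g\<in>G. \<forall>i. g $ i \<in> \<rat> \<and> 0 \<le> g $ i) \<and>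
        C = {x :: int ^ 'p. \<exists>l :: real ^ 'p \<Rightarrow> real.
               (\<forall>g\<in>G. l g \<in> \<rat> \<and> 0 \<le> l g) \<and>
               (\<chi> i. real_of_int (x $ i)) = (\<Sum>g\<in>G. l g *\<^sub>R g)})"

definition C_semigroup :: "(int ^ 'p) set \<Rightarrow> (int ^ 'p) set \<Rightarrow> bool" where
  "C_semigroup C S \<longleftrightarrow> S \<subseteq> C \<and> 0 \<in> S \<and> (\<forall>a\<in>S. \<forall>b\<in>S. a + b \<in> S) \<and> finite (C - S)"

definition gaps :: "(int ^ 'p) set \<Rightarrow> (int ^ 'p) set \<Rightarrow> (int ^ 'p) set" where
  "gaps C S = C - S"

definition monomial_order :: "(int ^ 'p \<Rightarrow> int ^ 'p \<Rightarrow> bool) \<Rightarrow> bool" where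
  "monomial_order le \<longleftrightarrow>
     (\<forall>x\<in>natvecs. le x x) \<and>
     (\<forall>x\<in>natvecs. \<forall>y\<in>natvecs. le x y \<and> le y x \<longrightarrow> x = y) \<and>
     (\<forall>x\<in>natvecs. \<forall>y\<in>natvecs. \<forall>z\<in>natvecs. le x y \<and> le y z \<longrightarrow> le x z) \<and>
     (\<forall>x\<in>natvecs. \<forall>y\<in>natvecs. le x y \<or> le y x) \<and>
     (\<forall>x\<in>natvecs. \<forall>y\<in>natvecs. \<forall>z\<in>natvecs. le x y \<longrightarrow> le (x + z) (y + z)) \<and>
     (\<forall>c\<in>natvecs. le 0 c)"

definition frobenius :: "(int ^ 'p \<Rightarrow> int ^ 'p \<Rightarrow> bool) \<Rightarrow> (int ^ 'p) set \<Rightarrow> (int ^ 'p) set \<Rightarrow> int ^ 'p \<Rightarrow> bool" where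
  "frobenius le C S f \<longleftrightarrow> f \<in> gaps C S \<and> (\<forall>h\<in>gaps C S. le h f)"

definition pseudo_frobenius :: "(int ^ 'p) set \<Rightarrow> (int ^ 'p) set \<Rightarrow> (int ^ 'p) set" where
  "pseudo_frobenius C S = {y \<in> gaps C S. \<forall>s \<in> S - {0}. y + s \<in> S}"

definition irreducible_Csg :: "(int ^ 'p \<Rightarrow> int ^ 'p \<Rightarrow> bool) \<Rightarrow> (int ^ 'p) set \<Rightarrow> (int ^ 'p) set \<Rightarrow> bool" where
  "irreducible_Csg le C S \<longleftrightarrow>
     (\<exists>f. frobenius le C S f \<and>
        (pseudo_frobenius C S = {f} \<or> (\<exists>h. h + h = f \<and> pseudo_frobenius C S = {f, h})))"

definition minimal_generator :: "(int ^ 'p) set \<Rightarrow> int ^ 'p \<Rightarrow> bool" where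
  "minimal_generator S x \<longleftrightarrow> x \<in> S \<and> x \<noteq> 0 \<and>
     \<not> (\<exists>a\<in>S - {0}. \<exists>b\<in>S - {0}. x = a + b)"

definition cone_le :: "(int ^ 'p) set \<Rightarrow> int ^ 'p \<Rightarrow> int ^ 'p \<Rightarrow> bool" where
  "cone_le C x y \<longleftrightarrow> y - x \<in> C"

definition I_S :: "(int ^ 'p) set \<Rightarrow> (int ^ 'p) set \<Rightarrow> int ^ 'p \<Rightarrow> (int ^ 'p) set" where
  "I_S C S n = {s \<in> S. cone_le C s n}"

end

theory Submission
  imports Defs
begin

lemma cone_nonneg:
  assumes "integer_cone C" "x \<in> C"
  shows "0 \<le> x $ i"
proof -
  obtain G where G: "finite G" "\<forall>g\<in>G. \<forall>i. g $ i \<in> \<rat> \<and> 0 \<le> g $ i"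
    and CC: "C = {x :: int ^ 'a. \<exists>l :: real ^ 'a \<Rightarrow> real.
               (\<forall>g\<in>G. l g \<in> \<rat> \<and> 0 \<le> l g) \<and>
               (\<chi> i. real_of_int (x $ i)) = (\<Sum>g\<in>G. l g *\<^sub>R g)}"
    using assms(1) unfolding integer_cone_def by blast
  obtain l where l: "\<forall>g\<in>G. l g \<in> \<rat> \<and> 0 \<le> l g"
    and e: "(\<chi> i. real_of_int (x $ i)) = (\<Sum>g\<in>G. l g *\<^sub>R g)"
    using assms(2) CC by blast
  have "real_of_int (x $ i) = (\<Sum>g\<in>G. l g *\<^sub>R g) $ i"
    using arg_cong[OF e, of "\<lambda>v. v $ i"] by simp
  also have "\<dots> = (\<Sum>g\<in>G. l g * g $ i)" by simp
  also have "\<dots> \<ge> 0" using l G by (intro sum_nonneg) auto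
  finally show ?thesis by simp
qed

lemma cone_add:
  assumes "integer_cone C" "x \<in> C" "y \<in> C"
  shows "x + y \<in> C"
proof -
  obtain G where G: "finite G" "\<forall>g\<in>G. \<forall>i. g $ i \<in> \<rat> \<and> 0 \<le> g $ i"
    and CC: "C = {x :: int ^ 'a. \<exists>l :: real ^ 'a \<Rightarrow> real.
               (\<forall>g\<in>G. l g \<in> \<rat> \<and> 0 \<le> l g) \<and>
               (\<chi> i. real_of_int (x $ i)) = (\<Sum>g\<in>G. l g *\<^sub>R g)}"
    using assms(1) unfolding integer_cone_def by blast
  obtain l1 where l1: "\<forall>g\<in>G. l1 g \<in> \<rat> \<and> 0 \<le> l1 g"
    and e1: "(\<chi> i. real_of_int (x $ i)) = (\<Sum>g\<in>G. l1 g *\<^sub>R g)"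
    using assms(2) CC by blast
  obtain l2 where l2: "\<forall>g\<in>G. l2 g \<in> \<rat> \<and> 0 \<le> l2 g"
    and e2: "(\<chi> i. real_of_int (y $ i)) = (\<Sum>g\<in>G. l2 g *\<^sub>R g)"
    using assms(3) CC by blast
  have "(\<chi> i. real_of_int ((x + y) $ i)) = (\<chi> i. real_of_int (x $ i)) + (\<chi> i. real_of_int (y $ i))"
    by (simp add: vec_eq_iff)
  also have "\<dots> = (\<Sum>g\<in>G. (l1 g + l2 g) *\<^sub>R g)"
    unfolding e1 e2 by (simp add: scaleR_add_left sum.distrib)
  finally have "(\<chi> i. real_of_int ((x + y) $ i)) = (\<Sum>g\<in>G. (\<lambda>g. l1 g + l2 g) g *\<^sub>R g)" .
  moreover have "\<forall>g\<in>G. (\<lambda>g. l1 g + l2 g) g \<in> \<rat> \<and> 0 \<le> (\<lambda>g. l1 g + l2 g) g"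
    using l1 l2 by auto
  ultimately show ?thesis unfolding CC by (intro CollectI exI[of _ "\<lambda>g. l1 g + l2 g"] conjI)
qed

definition csum :: "int ^ 'p \<Rightarrow> int" where "csum v = (\<Sum>i\<in>UNIV. v $ i)"

lemma csum_add: "csum (a + b) = csum a + csum b"
  unfolding csum_def by (simp add: sum.distrib)

lemma csum_pos:
  assumes "\<forall>i. 0 \<le> v $ i" "v \<noteq> 0"
  shows "0 < csum v"
proof -
  obtain i where i: "v $ i \<noteq> 0" using assms(2) by (auto simp: vec_eq_iff)
  have "v $ i \<le> csum v" unfolding csum_def
    by (rule member_le_sum) (use assms in auto)
  with i assms(1)[rule_format, of i] show ?thesis by linarith
qed

lemma gap_property:
  assumes cone: "integer_cone C" and mo: "monomial_order le"
    and sg: "C_semigroup C S" and irr: "irreducible_Csg le C S"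
    and fr: "frobenius le C S f" and g: "g \<in> C - S"
  shows "f - g \<in> S \<or> g + g = f"
proof -
  have SC: "S \<subseteq> C" and S0: "0 \<in> S" and Sadd: "\<And>a b. a \<in> S \<Longrightarrow> b \<in> S \<Longrightarrow> a + b \<in> S"
    and fin: "finite (C - S)"
    using sg unfolding C_semigroup_def by auto
  define A where "A = {k \<in> C - S. k - g \<in> S}"
  have finA: "finite A" using fin unfolding A_def by (rule rev_finite_subset) auto
  have gA: "g \<in> A" using g S0 unfolding A_def by auto
  define m where "m = Max (csum ` A)"
  have "m \<in> csum ` A" unfolding m_def using finA gA by (intro Max_in) auto
  then obtain k where kA: "k \<in> A" and km: "csum k = m" by auto
  have kmax: "\<And>k'. k' \<in> A \<Longrightarrow> csum k' \<le> csum k"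
    using finA km unfolding m_def by auto
  have kPF: "k \<in> pseudo_frobenius C S"
    unfolding pseudo_frobenius_def gaps_def
  proof (intro CollectI conjI ballI)
    show "k \<in> C - S" using kA unfolding A_def by auto
  next
    fix s assume s': "s \<in> S - {0}"
    hence s: "s \<in> S" "s \<noteq> 0" by auto
    show "k + s \<in> S"
    proof (rule ccontr)
      assume ns: "k + s \<notin> S"
      have "k + s \<in> C" using cone_add[OF cone] kA s SC unfolding A_def by auto
      moreover have "k + s - g \<in> S"
      proof -
        have e: "k + s - g = (k - g) + s" by (simp add: algebra_simps)
        have "(k - g) + s \<in> S" using Sadd kA s unfolding A_def by auto
        thus ?thesis by (simp only: e)
      qed
      ultimately have "k + s \<in> A" using ns unfolding A_def by auto
      hence "csum (k + s) \<le> csum k" by (rule kmax)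
      moreover have "0 < csum s"
        using csum_pos[of s] s SC cone_nonneg[OF cone] by auto
      ultimately show False by (simp add: csum_add)
    qed
  qed
  obtain f' where fr': "frobenius le C S f'" and
    pf: "pseudo_frobenius C S = {f'} \<or> (\<exists>h. h + h = f' \<and> pseudo_frobenius C S = {f', h})"
    using irr unfolding irreducible_Csg_def by blast
  have natv: "\<And>v. v \<in> C \<Longrightarrow> v \<in> natvecs"
    using cone_nonneg[OF cone] unfolding natvecs_def by auto
  have "f' = f"
  proof -
    have "f \<in> C" "f' \<in> C" "le f f'" "le f' f"
      using fr fr' unfolding frobenius_def gaps_def by auto
    thus ?thesis using mo natv unfolding monomial_order_def by blast
  qed
  have PFgood: "\<And>y s. y \<in> pseudo_frobenius C S \<Longrightarrow> s \<in> S \<Longrightarrow> s \<noteq> 0 \<Longrightarrow> y + s \<in> S"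
    unfolding pseudo_frobenius_def by auto
  from pf show ?thesis
  proof
    assume "pseudo_frobenius C S = {f'}"
    hence "k = f" using kPF \<open>f' = f\<close> by auto
    thus ?thesis using kA unfolding A_def by auto
  next
    assume "\<exists>h. h + h = f' \<and> pseudo_frobenius C S = {f', h}"
    then obtain h where hh: "h + h = f" and P: "pseudo_frobenius C S = {f, h}"
      using \<open>f' = f\<close> by auto
    from kPF P have "k = f \<or> k = h" by auto
    thus ?thesis
    proof
      assume "k = f" thus ?thesis using kA unfolding A_def by auto
    next
      assume kh: "k = h"
      have hg: "h - g \<in> S" using kA kh unfolding A_def by auto
      show ?thesis
      proof (cases "h - g = 0")
        case True
        hence "g = h" by simp
        thus ?thesis using hh by simp
      next
        case False
        have "h \<in> pseudo_frobenius C S" using P by simp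
        hence "h + (h - g) \<in> S" using PFgood[OF _ hg False] by blast
        moreover have "h + (h - g) = f - g" using hh by (simp add: algebra_simps)
        ultimately show ?thesis by simp
      qed
    qed
  qed
qed

theorem mainTheorem9:
  fixes C S :: "(int ^ 'p) set" and le :: "int ^ 'p \<Rightarrow> int ^ 'p \<Rightarrow> bool"
    and f x :: "int ^ 'p"
  assumes "integer_cone C"
    and "monomial_order le"
    and "C_semigroup C S"
    and "irreducible_Csg le C S"
    and "frobenius le C S f"
    and "x \<in> I_S C S f"
    and "minimal_generator S x"
    and "2 *s x - f \<notin> S"
    and "3 *s x \<noteq> 2 *s f"
    and "4 *s x \<noteq> 3 *s f"
  shows "C_semigroup C ((S - {x}) \<union> {f - x}) \<and>
         irreducible_Csg le C ((S - {x}) \<union> {f - x}) \<and>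
         frobenius le C ((S - {x}) \<union> {f - x}) f"
proof -
  note cone = assms(1) and mo = assms(2)
  have SC: "S \<subseteq> C" and S0: "0 \<in> S" and Sadd: "\<And>a b. a \<in> S \<Longrightarrow> b \<in> S \<Longrightarrow> a + b \<in> S"
    and fin: "finite (C - S)"
    using assms(3) unfolding C_semigroup_def by auto
  have GP: "\<And>g. g \<in> C - S \<Longrightarrow> f - g \<in> S \<or> g + g = f"
    using gap_property[OF assms(1-5)] by blast
  have xS: "x \<in> S" and fxC: "f - x \<in> C" using assms(6) unfolding I_S_def cone_le_def by auto
  have x0: "x \<noteq> 0" and xmin: "\<And>a b. a \<in> S \<Longrightarrow> a \<noteq> 0 \<Longrightarrow> b \<in> S \<Longrightarrow> b \<noteq> 0 \<Longrightarrow> x \<noteq> a + b"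
    using assms(7) unfolding minimal_generator_def by auto
  have fC: "f \<in> C" and fS: "f \<notin> S" and lef: "\<And>h. h \<in> C - S \<Longrightarrow> le h f"
    using assms(5) unfolding frobenius_def gaps_def by auto
  have xC: "x \<in> C" using xS SC by auto
  have natv: "\<And>v. v \<in> C \<Longrightarrow> v \<in> natvecs"
    using cone_nonneg[OF cone] unfolding natvecs_def by auto
  have mrefl: "\<And>a. a \<in> natvecs \<Longrightarrow> le a a"
    and antis: "\<And>a b. a \<in> natvecs \<Longrightarrow> b \<in> natvecs \<Longrightarrow> le a b \<Longrightarrow> le b a \<Longrightarrow> a = b"
    and mono: "\<And>a b c. a \<in> natvecs \<Longrightarrow> b \<in> natvecs \<Longrightarrow> c \<in> natvecs \<Longrightarrow> le a b \<Longrightarrow> le (a + c) (b + c)"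
    and le0: "\<And>c. c \<in> natvecs \<Longrightarrow> le 0 c"
    using mo unfolding monomial_order_def by blast+
  have zn: "(0::int^'p) \<in> natvecs" unfolding natvecs_def by simp
  have two: "2 *s x - f = x + x - f" by (simp add: vec_eq_iff)
  have xxf: "x + x - f \<notin> S" using assms(8) two by simp
  have xx: "x + x \<noteq> f" using xxf S0 by auto
  have fxS: "f - x \<notin> S"
  proof
    assume "f - x \<in> S"
    hence "x + (f - x) \<in> S" using Sadd xS by blast
    thus False using fS by simp
  qed
  define T where "T = (S - {x}) \<union> {f - x}"
  have TC: "T \<subseteq> C" using SC fxC unfolding T_def by auto
  have fxx: "f - x \<noteq> x" using xx by (auto simp: algebra_simps)
  have Tadd: "\<And>a b. a \<in> T \<Longrightarrow> b \<in> T \<Longrightarrow> a + b \<in> T"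
  proof -
    have mixed: "\<And>b. b \<in> S \<Longrightarrow> b \<noteq> x \<Longrightarrow> (f - x) + b \<in> T"
    proof -
      fix b assume b: "b \<in> S" "b \<noteq> x"
      show "(f - x) + b \<in> T"
      proof (cases "b = 0")
        case True thus ?thesis unfolding T_def by simp
      next
        case False
        have ne: "f - x + b \<noteq> x"
        proof
          assume "f - x + b = x"
          hence "b = x + x - f" by (simp add: algebra_simps)
          thus False using b xxf by simp
        qed
        have "f - x + b \<in> S"
        proof (rule ccontr)
          assume nS: "f - x + b \<notin> S"
          have "f - x + b \<in> C" using cone_add[OF cone fxC] b SC by auto
          hence "f - (f - x + b) \<in> S \<or> (f - x + b) + (f - x + b) = f" using GP nS by blast
          thus False
          proof
            assume "f - (f - x + b) \<in> S"
            hence xb: "x - b \<in> S" by (simp add: algebra_simps)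
            have "x - b \<noteq> 0" using b by simp
            moreover have "x = b + (x - b)" by simp
            ultimately show False using xmin[OF b(1) False xb] by blast
          next
            assume "(f - x + b) + (f - x + b) = f"
            hence "x + x - f = b + b" by (simp add: vec_eq_iff algebra_simps)
            thus False using xxf Sadd b by metis
          qed
        qed
        thus ?thesis using ne unfolding T_def by auto
      qed
    qed
    have ff: "(f - x) + (f - x) \<in> T"
    proof -
      have ne: "(f - x) + (f - x) \<noteq> x"
      proof
        assume "(f - x) + (f - x) = x"
        hence "3 *s x = 2 *s f" by (simp add: vec_eq_iff algebra_simps)
        thus False using assms(9) by simp
      qed
      have "(f - x) + (f - x) \<in> S"
      proof (rule ccontr)
        assume nS: "(f - x) + (f - x) \<notin> S"
        have "(f - x) + (f - x) \<in> C" using cone_add[OF cone fxC fxC] .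
        hence "f - ((f - x) + (f - x)) \<in> S \<or> ((f - x) + (f - x)) + ((f - x) + (f - x)) = f"
          using GP nS by blast
        thus False
        proof
          assume "f - ((f - x) + (f - x)) \<in> S"
          hence "x + x - f \<in> S" by (simp add: algebra_simps)
          thus False using xxf by simp
        next
          assume "((f - x) + (f - x)) + ((f - x) + (f - x)) = f"
          hence "4 *s x = 3 *s f" by (simp add: vec_eq_iff algebra_simps)
          thus False using assms(10) by simp
        qed
      qed
      thus ?thesis using ne unfolding T_def by auto
    qed
    fix a b assume a: "a \<in> T" and b: "b \<in> T"
    show "a + b \<in> T"
    proof (cases "a = f - x")
      case A: True
      show ?thesis
      proof (cases "b = f - x")
        case True thus ?thesis using A ff by simp
      next
        case False thus ?thesis using A b mixed unfolding T_def by auto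
      qed
    next
      case A: False
      hence aS: "a \<in> S" "a \<noteq> x" using a unfolding T_def by auto
      show ?thesis
      proof (cases "b = f - x")
        case True thus ?thesis using mixed[OF aS] by (simp add: add.commute)
      next
        case False
        hence bS: "b \<in> S" "b \<noteq> x" using b unfolding T_def by auto
        have "a + b \<noteq> x"
        proof (cases "a = 0")
          case True thus ?thesis using bS by simp
        next
          case a0: False
          show ?thesis
          proof (cases "b = 0")
            case True thus ?thesis using aS by simp
          next
            case False thus ?thesis using xmin[OF aS(1) a0 bS(1) False] by simp
          qed
        qed
        thus ?thesis using Sadd[OF aS(1) bS(1)] unfolding T_def by auto
      qed
    qed
  qed
  have T0: "0 \<in> T" using S0 x0 unfolding T_def by auto
  have "C - T \<subseteq> insert x (C - S)" unfolding T_def by auto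
  hence finT: "finite (C - T)" using fin finite_subset by blast
  have sgT: "C_semigroup C T" unfolding C_semigroup_def using TC T0 Tadd finT by blast
  have gapsT: "\<And>h. h \<in> C - T \<Longrightarrow> h \<in> C - S \<or> h = x" unfolding T_def by auto
  have lexf: "le x f"
  proof -
    have "le (0 + x) ((f - x) + x)"
      using mono[OF zn natv[OF fxC] natv[OF xC] le0[OF natv[OF fxC]]] .
    thus ?thesis by simp
  qed
  have fT: "f \<notin> T" using fS x0 unfolding T_def by auto
  have frT: "frobenius le C T f"
    unfolding frobenius_def gaps_def using fC fT lef gapsT lexf by blast
  have GPT: "\<And>g. g \<in> C - T \<Longrightarrow> f - g \<in> T \<or> g + g = f"
  proof -
    fix g assume g: "g \<in> C - T"
    show "f - g \<in> T \<or> g + g = f"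
    proof (cases "g = x")
      case True thus ?thesis unfolding T_def by auto
    next
      case False
      hence gS: "g \<in> C - S" and gf: "g \<noteq> f - x" using g unfolding T_def by auto
      have "f - g \<noteq> x" using gf by (auto simp: algebra_simps)
      thus ?thesis using GP[OF gS] unfolding T_def by auto
    qed
  qed
  have fPF: "f \<in> pseudo_frobenius C T"
    unfolding pseudo_frobenius_def gaps_def
  proof (intro CollectI conjI ballI)
    show "f \<in> C - T" using fC fT by simp
  next
    fix s assume s': "s \<in> T - {0}"
    hence s: "s \<in> T" "s \<noteq> 0" by auto
    show "f + s \<in> T"
    proof (rule ccontr)
      assume ns: "f + s \<notin> T"
      have sC: "s \<in> C" using s TC by auto
      have fsC: "f + s \<in> C" using cone_add[OF cone fC sC] .
      have "le (f + s) f" using frT fsC ns unfolding frobenius_def gaps_def by auto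
      moreover have "le (0 + f) (s + f)" using mono[OF zn natv[OF sC] natv[OF fC] le0[OF natv[OF sC]]] .
      hence "le f (f + s)" by (simp add: add.commute)
      ultimately have "f + s = f" using antis natv fsC fC by blast
      thus False using s by simp
    qed
  qed
  have otherPF: "\<And>y. y \<in> pseudo_frobenius C T \<Longrightarrow> y \<noteq> f \<Longrightarrow> y + y = f"
  proof -
    fix y assume y: "y \<in> pseudo_frobenius C T" "y \<noteq> f"
    have yg: "y \<in> C - T" using y unfolding pseudo_frobenius_def gaps_def by auto
    show "y + y = f"
    proof (rule ccontr)
      assume "y + y \<noteq> f"
      hence fy: "f - y \<in> T" using GPT[OF yg] by blast
      have "f - y \<noteq> 0" using y by simp
      moreover have "\<forall>s\<in>T - {0}. y + s \<in> T" using y(1) unfolding pseudo_frobenius_def by auto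
      ultimately have "y + (f - y) \<in> T" using fy by blast
      thus False using fT by simp
    qed
  qed
  have irrT: "irreducible_Csg le C T"
    unfolding irreducible_Csg_def
  proof (intro exI conjI)
    show "frobenius le C T f" by (rule frT)
    show "pseudo_frobenius C T = {f} \<or> (\<exists>h. h + h = f \<and> pseudo_frobenius C T = {f, h})"
    proof (cases "pseudo_frobenius C T \<subseteq> {f}")
      case True thus ?thesis using fPF by auto
    next
      case False
      then obtain y where y: "y \<in> pseudo_frobenius C T" "y \<noteq> f" by auto
      have yy: "y + y = f" using otherPF y by blast
      have "pseudo_frobenius C T \<subseteq> {f, y}"
      proof
        fix z assume z: "z \<in> pseudo_frobenius C T"
        show "z \<in> {f, y}"
        proof (cases "z = f")
          case True thus ?thesis by simp
        next
          case False
          have "z + z = y + y" using otherPF[OF z False] yy by simp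
          hence "z = y" by (simp add: vec_eq_iff)
          thus ?thesis by simp
        qed
      qed
      moreover have "{f, y} \<subseteq> pseudo_frobenius C T" using fPF y by auto
      ultimately have "pseudo_frobenius C T = {f, y}" by (rule subset_antisym)
      thus ?thesis using yy by blast
    qed
  qed
  show ?thesis using sgT irrT frT unfolding T_def by blast
qed

end
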